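(* Let $(X,d)$ be a compact metric space and $(X,f)$ a flow or semiflow that has the weak reparametrized gluing orbit property and is not minimal. Then there exist $z\in X$, $\epsilon>0$ and $\tau>0$ such that $d(f^t(z),z)\ge\epsilon$ for every $t\ge\tau$.
   Context: A flow (resp. semiflow) on $X$ is a continuous family $\{f^t\}$ of continuous maps $X\to X$ indexed by $t\in\mathbb{R}$ (resp. $t\in[0,\infty)$) with $f^0=\mathrm{id}$ and $f^{t+s}=f^t\circ f^s$. $(X,f)$ is minimal if for every $x\in X$ the forward orbit $\{f^t(x):t\ge 0\}$ is dense in $X$. For $L\ge 1$, an $L$-reparametrization is a strictly increasing continuous function $\gamma:[0,\infty)\to[0,\infty)$ with $\gamma(0)=0$ and $L^{-1}\le \frac{\gamma(t_1)-\gamma(t_2)}{t_1-t_2}\le L$ for all $t_1\ne t_2$ in $[0,\infty)$. An orbit sequence of rank $k$ is a finite sequence $\mathscr{C}=\{(x_j,m_j)\in X\times[0,\infty):j=1,\dots,k\}$. A gap for it is a $(k-1)$-tuple $\mathscr{g}=\{t_j\in[0,\infty):j=1,\dots,k-1\}$. Given a reparametrization $\gamma$ and $\epsilon>0$, $(\mathscr{C},\mathscr{g},\gamma)$ is $\epsilon$-shadowed by $z\in X$ if for every $j=1,\dots,k$ and every $t\in[0,m_j]$ one has $d(f^{\gamma(s_j+t)}(z),f^t(x_j))<\epsilon$, where $s_1=0$ and $s_j=\sum_{i=1}^{j-1}(m_i+t_i)$ for $j\ge2$. $(X,f)$ has the weak reparametrized gluing orbit property if for every $\epsilon>0$ there is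 $M=M(\epsilon)>0$ such that for every orbit sequence $\mathscr{C}$ there exist a gap $\mathscr{g}$ with $\max\mathscr{g}\le M$ and an $M$-reparametrization $\gamma$ such that $(\mathscr{C},\mathscr{g},\gamma)$ is $\epsilon$-shadowed by some point of $X$. *)

theory Defs
  imports "HOL-Analysis.Analysis"
begin

definition is_semiflow :: "'a::metric_space set \<Rightarrow> (real \<Rightarrow> 'a \<Rightarrow> 'a) \<Rightarrow> bool" where
  "is_semiflow X f \<longleftrightarrow>
     continuous_on ({0..} \<times> X) (\<lambda>(t, x). f t x) \<and>
     (\<forall>t\<ge>0. \<forall>x\<in>X. f t x \<in> X) \<and>
     (\<forall>x\<in>X. f 0 x = x) \<and>
     (\<forall>t\<ge>0. \<forall>s\<ge>0. \<forall>x\<in>X. f (t + s) x = f t (f s x))"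

definition is_flow :: "'a::metric_space set \<Rightarrow> (real \<Rightarrow> 'a \<Rightarrow> 'a) \<Rightarrow> bool" where
  "is_flow X f \<longleftrightarrow>
     continuous_on (UNIV \<times> X) (\<lambda>(t, x). f t x) \<and>
     (\<forall>t. \<forall>x\<in>X. f t x \<in> X) \<and>
     (\<forall>x\<in>X. f 0 x = x) \<and>
     (\<forall>t s. \<forall>x\<in>X. f (t + s) x = f t (f s x))"

definition minimal :: "'a::metric_space set \<Rightarrow> (real \<Rightarrow> 'a \<Rightarrow> 'a) \<Rightarrow> bool" where
  "minimal X f \<longleftrightarrow> (\<forall>x\<in>X. X \<subseteq> closure {f t x | t. t \<ge> 0})"

definition reparametrization :: "real \<Rightarrow> (real \<Rightarrow> real) \<Rightarrow> bool" where
  "reparametrization L \<gamma> \<longleftrightarrow>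
     L \<ge> 1 \<and> strict_mono_on {0..} \<gamma> \<and> continuous_on {0..} \<gamma> \<and> \<gamma> 0 = 0 \<and>
     (\<forall>t\<ge>0. \<gamma> t \<ge> 0) \<and>
     (\<forall>t1\<ge>0. \<forall>t2\<ge>0. t1 \<noteq> t2 \<longrightarrow>
        1 / L \<le> (\<gamma> t1 - \<gamma> t2) / (t1 - t2) \<and> (\<gamma> t1 - \<gamma> t2) / (t1 - t2) \<le> L)"

text \<open>Orbit sequence of rank k: points x j and lengths m j for j < k (0-indexed);
  gap g j for j < k - 1; starting times s j = \<Sum>i<j. (m i + g i).\<close>
definition shadowed ::
  "(real \<Rightarrow> 'a::metric_space \<Rightarrow> 'a) \<Rightarrow> nat \<Rightarrow> (nat \<Rightarrow> 'a) \<Rightarrow> (nat \<Rightarrow> real) \<Rightarrow>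
   (nat \<Rightarrow> real) \<Rightarrow> (real \<Rightarrow> real) \<Rightarrow> real \<Rightarrow> 'a \<Rightarrow> bool" where
  "shadowed f k x m g \<gamma> \<epsilon> z \<longleftrightarrow>
     (\<forall>j<k. \<forall>t\<in>{0..m j}.
        dist (f (\<gamma> ((\<Sum>i<j. m i + g i) + t)) z) (f t (x j)) < \<epsilon>)"

definition weak_reparam_gluing :: "'a::metric_space set \<Rightarrow> (real \<Rightarrow> 'a \<Rightarrow> 'a) \<Rightarrow> bool" where
  "weak_reparam_gluing X f \<longleftrightarrow>
     (\<forall>\<epsilon>>0. \<exists>M>0. \<forall>k::nat. \<forall>x m. k \<ge> 1 \<longrightarrow> (\<forall>j<k. x j \<in> X \<and> m j \<ge> 0) \<longrightarrow>
        (\<exists>g \<gamma> z. (\<forall>j<k - 1. 0 \<le> g j \<and> g j \<le> M) \<and> reparametrization M \<gamma> \<and>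
                 z \<in> X \<and> shadowed f k x m g \<gamma> \<epsilon> z))"

end

theory Submission
  imports Defs
begin

lemma flow_common:
  fixes X :: "'a::metric_space set" and f :: "real \<Rightarrow> 'a \<Rightarrow> 'a"
  assumes "is_flow X f \<or> is_semiflow X f"
  shows "\<forall>s\<ge>0. continuous_on X (f s)" and "\<forall>x\<in>X. f 0 x = x"
proof -
  have c: "\<forall>s\<ge>0. continuous_on ({0..} \<times> X) (\<lambda>(t, x). f t x)"
    using assms unfolding is_flow_def is_semiflow_def
    by (auto intro: continuous_on_subset)
  show "\<forall>s\<ge>0. continuous_on X (f s)"
  proof (intro allI impI)
    fix s :: real assume s: "s \<ge> 0"
    have "continuous_on X ((\<lambda>(t, x). f t x) \<circ> (\<lambda>x. (s, x)))"
      apply (rule continuous_on_compose)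
       apply (intro continuous_intros)
      apply (rule continuous_on_subset[OF c[rule_format, OF s]])
      using s by auto
    then show "continuous_on X (f s)" by (simp add: o_def)
  qed
  show "\<forall>x\<in>X. f 0 x = x"
    using assms unfolding is_flow_def is_semiflow_def by auto
qed

theorem lemma3p1:
  fixes X :: "'a::metric_space set" and f :: "real \<Rightarrow> 'a \<Rightarrow> 'a"
  assumes "compact X"
    and "is_flow X f \<or> is_semiflow X f"
    and "weak_reparam_gluing X f"
    and "\<not> minimal X f"
  shows "\<exists>z\<in>X. \<exists>\<epsilon>>0. \<exists>\<tau>>0. \<forall>t\<ge>\<tau>. dist (f t z) z \<ge> \<epsilon>"
proof -
  note cont = flow_common(1)[OF assms(2)]
  note id0 = flow_common(2)[OF assms(2)]
  obtain x y where xX: "x \<in> X" and yX: "y \<in> X"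
    and ny: "y \<notin> closure {f t x | t. t \<ge> 0}"
    using assms(4) unfolding minimal_def by auto
  then obtain e where e: "e > 0" and orb: "\<And>t. t \<ge> 0 \<Longrightarrow> dist (f t x) y \<ge> e"
    unfolding closure_approachable by (auto simp: not_less)
  define \<epsilon> where "\<epsilon> = e / 3"
  have \<epsilon>: "\<epsilon> > 0" using e by (simp add: \<epsilon>_def)
  obtain M where M: "M > 0" and glue: "\<And>k x m. k \<ge> 1 \<Longrightarrow> (\<forall>j<k. x j \<in> X \<and> m j \<ge> 0) \<Longrightarrow>
        (\<exists>g \<gamma> z. (\<forall>j<k - 1. 0 \<le> g j \<and> g j \<le> M) \<and> reparametrization M \<gamma> \<and>
                 z \<in> X \<and> shadowed f k x m g \<gamma> \<epsilon> z)"
    using assms(3) \<epsilon> unfolding weak_reparam_gluing_def by blast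
  have step: "\<exists>z\<in>X. dist z y < \<epsilon> \<and> (\<forall>s. M * M \<le> s \<and> s \<le> real n / M \<longrightarrow> dist (f s z) y \<ge> e - \<epsilon>)"
    for n :: nat
  proof -
    define xs where "xs = (\<lambda>j::nat. if j = 0 then y else x)"
    define ms where "ms = (\<lambda>j::nat. if j = 0 then 0 else real n)"
    obtain g \<gamma> z where g: "\<forall>j<2 - 1. 0 \<le> g j \<and> g j \<le> M" and rp: "reparametrization M \<gamma>"
      and zX: "z \<in> X" and sh: "shadowed f 2 xs ms g \<gamma> \<epsilon> z"
    proof -
      have "\<forall>j<2. xs j \<in> X \<and> ms j \<ge> 0" using xX yX by (simp add: xs_def ms_def)
      then show ?thesis using glue[of 2 xs ms] that by auto
    qed
    have g0: "0 \<le> g 0" "g 0 \<le> M" using g by auto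
    have sh0: "dist (f (\<gamma> 0) z) (f 0 y) < \<epsilon>"
      using sh unfolding shadowed_def by (auto simp: xs_def ms_def dest: spec[of _ 0])
    have sh1: "\<And>t. 0 \<le> t \<Longrightarrow> t \<le> real n \<Longrightarrow> dist (f (\<gamma> (g 0 + t)) z) (f t x) < \<epsilon>"
    proof -
      fix t :: real assume "0 \<le> t" "t \<le> real n"
      then show "dist (f (\<gamma> (g 0 + t)) z) (f t x) < \<epsilon>"
        using sh unfolding shadowed_def
        by (auto simp: xs_def ms_def dest!: spec[of _ 1])
    qed
    have rpd: "\<gamma> 0 = 0" "continuous_on {0..} \<gamma>"
      "\<And>t1 t2. t1 \<ge> 0 \<Longrightarrow> t2 \<ge> 0 \<Longrightarrow> t1 \<noteq> t2 \<Longrightarrow>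
        1 / M \<le> (\<gamma> t1 - \<gamma> t2) / (t1 - t2) \<and> (\<gamma> t1 - \<gamma> t2) / (t1 - t2) \<le> M"
      using rp unfolding reparametrization_def by auto
    have z0: "dist z y < \<epsilon>" using sh0 rpd(1) id0 zX yX by auto
    have "dist (f s z) y \<ge> e - \<epsilon>" if s1: "M * M \<le> s" and s2: "s \<le> real n / M" for s
    proof -
      have n0: "real n > 0"
      proof (rule ccontr)
        assume "\<not> real n > 0"
        then have "real n = 0" by simp
        with s1 s2 M show False by (simp add: mult_pos_pos) (smt (verit) mult_pos_pos)
      qed
      have lo: "\<gamma> (g 0) \<le> s"
      proof (cases "g 0 = 0")
        case True then show ?thesis using rpd(1) s1 M by (simp add: mult_pos_pos) (smt (verit) mult_pos_pos)
      next
        case False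
        then have gp: "g 0 > 0" using g0 by simp
        have "(\<gamma> (g 0) - \<gamma> 0) / (g 0 - 0) \<le> M" using rpd(3)[of "g 0" 0] gp by auto
        then have "\<gamma> (g 0) \<le> M * g 0" using gp rpd(1) by (simp add: divide_le_eq)
        also have "\<dots> \<le> M * M" using g0 M by (simp add: mult_left_mono)
        finally show ?thesis using s1 by simp
      qed
      have hi: "s \<le> \<gamma> (g 0 + real n)"
      proof -
        have pos: "g 0 + real n > 0" using n0 g0 by simp
        have "1 / M \<le> (\<gamma> (g 0 + real n) - \<gamma> 0) / (g 0 + real n - 0)"
          using rpd(3)[of "g 0 + real n" 0] pos by auto
        then have "(g 0 + real n) / M \<le> \<gamma> (g 0 + real n)"
          using pos rpd(1) M by (simp add: le_divide_eq divide_le_eq field_simps)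
        moreover have "real n / M \<le> (g 0 + real n) / M" using g0 M by (simp add: divide_right_mono)
        ultimately show ?thesis using s2 by simp
      qed
      obtain t' where t': "g 0 \<le> t'" "t' \<le> g 0 + real n" "\<gamma> t' = s"
        using IVT'[of \<gamma> "g 0" s "g 0 + real n"] lo hi g0
          continuous_on_subset[OF rpd(2), of "{g 0 .. g 0 + real n}"] by auto
      have d1: "dist (f s z) (f (t' - g 0) x) < \<epsilon>"
        using sh1[of "t' - g 0"] t' by auto
      have d2: "dist (f (t' - g 0) x) y \<ge> e" using orb t' by auto
      show ?thesis using d1 d2 dist_triangle[of "f (t' - g 0) x" y "f s z"]
        by (simp add: dist_commute)
    qed
    then show ?thesis using zX z0 by blast
  qed
  then obtain zs where zs: "\<And>n. zs n \<in> X" "\<And>n. dist (zs n) y < \<epsilon>"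
    "\<And>n s. M * M \<le> s \<Longrightarrow> s \<le> real n / M \<Longrightarrow> dist (f s (zs n)) y \<ge> e - \<epsilon>"
    by metis
  obtain l r where lX: "l \<in> X" and r: "strict_mono r" and lim: "(zs \<circ> r) \<longlonglongrightarrow> l"
    using seq_compactE[OF compact_imp_seq_compact[OF assms(1)], of zs] zs(1) by blast
  have ly: "dist l y \<le> \<epsilon>"
    using LIMSEQ_le_const2[OF tendsto_dist[OF lim tendsto_const[of y]], of \<epsilon>] zs(2)
    by (auto intro: less_imp_le)
  have far: "dist (f s l) y \<ge> e - \<epsilon>" if s: "s \<ge> M * M" for s
  proof -
    have s0: "s \<ge> 0" using s M by (smt (verit) mult_pos_pos)
    have fl: "(\<lambda>n. f s ((zs \<circ> r) n)) \<longlonglongrightarrow> f s l"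
      using continuous_on_tendsto_compose[OF cont[rule_format, OF s0] lim lX] zs(1) by auto
    obtain N :: nat where N: "real N \<ge> s * M" using real_arch_simple by blast
    have "\<forall>n\<ge>N. e - \<epsilon> \<le> dist (f s ((zs \<circ> r) n)) y"
    proof (intro allI impI)
      fix n assume "n \<ge> N"
      then have "r n \<ge> N" using seq_suble[OF r, of n] by simp
      then have "real (r n) \<ge> s * M" using N by linarith
      then have "s \<le> real (r n) / M" using M by (simp add: le_divide_eq)
      then show "e - \<epsilon> \<le> dist (f s ((zs \<circ> r) n)) y" using zs(3)[OF s] by simp
    qed
    then show ?thesis
      using LIMSEQ_le_const[OF tendsto_dist[OF fl tendsto_const[of y]]] by blast
  qed
  have "\<forall>t\<ge>M * M + 1. dist (f t l) l \<ge> \<epsilon>"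
  proof (intro allI impI)
    fix t assume "M * M + 1 \<le> t"
    then have "dist (f t l) y \<ge> e - \<epsilon>" using far by simp
    then show "\<epsilon> \<le> dist (f t l) l"
      using ly dist_triangle[of "f t l" y l] \<epsilon>_def by (simp add: dist_commute)
  qed
  moreover have "M * M + 1 > 0" using M by (smt (verit) mult_pos_pos)
  ultimately show ?thesis using lX \<epsilon> by blast
qed

end
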